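(* For all $n,k\geq 1$, the space $\overline{\mathrm{SP}}^n(\bigvee^kS^1)$ is homeomorphic to the $n$-skeleton of the torus $(S^1)^k$, where $(S^1)^k$ carries the product CW structure in which each circle factor has one $0$-cell (the identity) and one $1$-cell.
   Context: Each circle of the wedge $\bigvee^kS^1$ is identified with the circle group $S^1$, the wedge point being the identity $1$ of each. $\mathrm{SP}^nY=Y^n/\Sigma_n$ is the $n$-th symmetric product, with points $\langle x_1,\ldots,x_n\rangle$. $\overline{\mathrm{SP}}^n(\bigvee^kS^1)$ is the quotient of $\mathrm{SP}^n(\bigvee^kS^1)$ by the equivalence relation generated by $\langle x,y,z_1,\ldots,z_{n-2}\rangle\sim\langle *,xy,z_1,\ldots,z_{n-2}\rangle$ whenever $x,y$ lie in the same circle, $xy$ being their product in that circle group and $*$ the wedge point. *)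

theory Defs
  imports "HOL-Analysis.Analysis" "HOL-Combinatorics.Permutations"
begin

text \<open>Quotient of a topological space X by a relation r (intended to be an equivalence
  relation on topspace X).\<close>

definition qcls :: "'a topology \<Rightarrow> ('a \<Rightarrow> 'a \<Rightarrow> bool) \<Rightarrow> 'a \<Rightarrow> 'a set" where
  "qcls X r x = {y \<in> topspace X. r x y}"

lemma istopology_quot:
  "istopology (\<lambda>U. U \<subseteq> qcls X r ` topspace X \<and> openin X {x \<in> topspace X. qcls X r x \<in> U})"
proof -
  have inter: "{x \<in> topspace X. qcls X r x \<in> S \<inter> T}
      = {x \<in> topspace X. qcls X r x \<in> S} \<inter> {x \<in> topspace X. qcls X r x \<in> T}" for S T
    by auto
  have un: "{x \<in> topspace X. qcls X r x \<in> \<Union>K} = (\<Union>U\<in>K. {x \<in> topspace X. qcls X r x \<in> U})" for K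
    by auto
  show ?thesis
    unfolding istopology_def
    apply (intro conjI allI impI)
       apply blast
      apply (simp only: inter) apply (blast intro: openin_Int)
     apply blast
    apply (simp only: un) apply (blast intro: openin_Union)
    done
qed

definition quot_top :: "'a topology \<Rightarrow> ('a \<Rightarrow> 'a \<Rightarrow> bool) \<Rightarrow> 'a set topology" where
  "quot_top X r = topology (\<lambda>U. U \<subseteq> qcls X r ` topspace X \<and>
                                 openin X {x \<in> topspace X. qcls X r x \<in> U})"

definition circle :: "complex topology" where
  "circle = subtopology euclidean (sphere 0 1)"

definition wedge_rel :: "nat \<times> complex \<Rightarrow> nat \<times> complex \<Rightarrow> bool" where
  "wedge_rel p q \<longleftrightarrow> p = q \<or> (snd p = 1 \<and> snd q = 1)"

definition wedge :: "nat \<Rightarrow> (nat \<times> complex) set topology" where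
  "wedge k = quot_top (prod_topology (discrete_topology {..<k}) circle) wedge_rel"

definition wpt :: "nat \<Rightarrow> nat \<Rightarrow> complex \<Rightarrow> (nat \<times> complex) set" where
  "wpt k c x = qcls (prod_topology (discrete_topology {..<k}) circle) wedge_rel (c, x)"

definition perm_rel :: "nat \<Rightarrow> (nat \<Rightarrow> 'a) \<Rightarrow> (nat \<Rightarrow> 'a) \<Rightarrow> bool" where
  "perm_rel n f g \<longleftrightarrow> (\<exists>\<pi>. \<pi> permutes {..<n} \<and> g = f \<circ> \<pi>)"

definition power_top :: "nat \<Rightarrow> 'a topology \<Rightarrow> (nat \<Rightarrow> 'a) topology" where
  "power_top n Y = product_topology (\<lambda>_. Y) {..<n}"

definition SP :: "nat \<Rightarrow> 'a topology \<Rightarrow> (nat \<Rightarrow> 'a) set topology" where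
  "SP n Y = quot_top (power_top n Y) (perm_rel n)"

text \<open>The elementary relation  <x,y,z..> ~ <*,xy,z..>  for x,y in the same circle c.\<close>
definition SPbar_step :: "nat \<Rightarrow> nat \<Rightarrow>
    (nat \<Rightarrow> (nat \<times> complex) set) set \<Rightarrow> (nat \<Rightarrow> (nat \<times> complex) set) set \<Rightarrow> bool" where
  "SPbar_step n k A B \<longleftrightarrow>
     A \<in> topspace (SP n (wedge k)) \<and>
     (\<exists>f \<in> A. \<exists>i j c x y. i < n \<and> j < n \<and> i \<noteq> j \<and> c < k \<and>
        x \<in> sphere 0 1 \<and> y \<in> sphere 0 1 \<and>
        f i = wpt k c x \<and> f j = wpt k c y \<and>
        B = qcls (power_top n (wedge k)) (perm_rel n) (f(i := wpt k c 1, j := wpt k c (x * y))))"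

definition SPbar :: "nat \<Rightarrow> nat \<Rightarrow> (nat \<Rightarrow> (nat \<times> complex) set) set set topology" where
  "SPbar n k = quot_top (SP n (wedge k)) (equivclp (SPbar_step n k))"

definition torus :: "nat \<Rightarrow> (nat \<Rightarrow> complex) topology" where
  "torus k = product_topology (\<lambda>_. circle) {..<k}"

text \<open>In the product CW structure, the cells of (S^1)^k are products of the 0-cell {1}
  or the open 1-cell (S^1 - {1}) in each factor; a cell has dimension equal to the number
  of 1-cell factors. Hence the n-skeleton consists of the points with at most n
  coordinates different from 1.\<close>
definition torus_skeleton :: "nat \<Rightarrow> nat \<Rightarrow> (nat \<Rightarrow> complex) topology" where
  "torus_skeleton n k = subtopology (torus k) {x. card {i \<in> {..<k}. x i \<noteq> 1} \<le> n}"

end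

theory Submission
  imports Defs
begin


lemma topspace_quot_top: "topspace (quot_top X r) = qcls X r ` topspace X"
proof -
  have o: "openin (quot_top X r) = (\<lambda>U. U \<subseteq> qcls X r ` topspace X \<and> openin X {x \<in> topspace X. qcls X r x \<in> U})"
    unfolding quot_top_def by (rule topology_inverse'[OF istopology_quot])
  have "{x \<in> topspace X. qcls X r x \<in> qcls X r ` topspace X} = topspace X" by auto
  hence "openin (quot_top X r) (qcls X r ` topspace X)" unfolding o by auto
  moreover have "openin (quot_top X r) U \<Longrightarrow> U \<subseteq> qcls X r ` topspace X" for U unfolding o by auto
  ultimately show ?thesis by (meson openin_subset openin_topspace subset_antisym)
qed

lemma openin_quot_top: "openin (quot_top X r) U \<longleftrightarrow> U \<subseteq> qcls X r ` topspace X \<and> openin X {x \<in> topspace X. qcls X r x \<in> U}"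
proof -
  have o: "openin (quot_top X r) = (\<lambda>U. U \<subseteq> qcls X r ` topspace X \<and> openin X {x \<in> topspace X. qcls X r x \<in> U})"
    unfolding quot_top_def by (rule topology_inverse'[OF istopology_quot])
  show ?thesis by (simp add: o)
qed

lemma continuous_map_qcls: "continuous_map X (quot_top X r) (qcls X r)"
  unfolding continuous_map_def topspace_quot_top openin_quot_top
  by (auto intro: openin_subopen)

lemma compact_quot: "compact_space X \<Longrightarrow> compact_space (quot_top X r)"
  unfolding compact_space_def
  using image_compactin[OF _ continuous_map_qcls, of X "topspace X" r] topspace_quot_top[of X r] by simp

definition lift :: "('a \<Rightarrow> 'b) \<Rightarrow> 'a set \<Rightarrow> 'b" where
  "lift h C = h (SOME x. x \<in> C)"

lemma lift_qcls:
  assumes "x \<in> topspace X" "r x x" "\<And>y. y \<in> topspace X \<Longrightarrow> r x y \<Longrightarrow> h y = h x"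
  shows "lift h (qcls X r x) = h x"
proof -
  have "x \<in> qcls X r x" using assms by (simp add: qcls_def)
  hence "(SOME y. y \<in> qcls X r x) \<in> qcls X r x" by (rule someI)
  hence "(SOME y. y \<in> qcls X r x) \<in> topspace X \<and> r x (SOME y. y \<in> qcls X r x)" by (simp add: qcls_def)
  thus ?thesis using assms(3) unfolding lift_def by blast
qed

lemma continuous_map_lift:
  assumes h: "continuous_map X Y h"
    and refl: "\<And>x. x \<in> topspace X \<Longrightarrow> r x x"
    and resp: "\<And>x y. x \<in> topspace X \<Longrightarrow> y \<in> topspace X \<Longrightarrow> r x y \<Longrightarrow> h y = h x"
  shows "continuous_map (quot_top X r) Y (lift h)"
proof -
  have L: "x \<in> topspace X \<Longrightarrow> lift h (qcls X r x) = h x" for x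
    by (rule lift_qcls) (auto intro: refl resp)
  show ?thesis
  unfolding continuous_map_def topspace_quot_top openin_quot_top
  proof (intro conjI allI impI)
    show "lift h \<in> qcls X r ` topspace X \<rightarrow> topspace Y"
    proof (rule Pi_I)
      fix C assume "C \<in> qcls X r ` topspace X"
      then obtain x where x: "x \<in> topspace X" "C = qcls X r x" by blast
      have "h x \<in> topspace Y" using continuous_map_image_subset_topspace[OF h] x by blast
      thus "lift h C \<in> topspace Y" using L[OF x(1)] x(2) by simp
    qed
  next
    fix U show "{x \<in> qcls X r ` topspace X. lift h x \<in> U} \<subseteq> qcls X r ` topspace X" by blast
  next
    fix U assume U: "openin Y U"
    have "{x \<in> topspace X. qcls X r x \<in> {x \<in> qcls X r ` topspace X. lift h x \<in> U}} = {x \<in> topspace X. h x \<in> U}"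
      using L by auto
    thus "openin X {x \<in> topspace X. qcls X r x \<in> {x \<in> qcls X r ` topspace X. lift h x \<in> U}}"
      using h U unfolding continuous_map_def by auto
  qed
qed

lemma qcls_eq:
  assumes "r x y" "\<And>a b. r a b \<Longrightarrow> r b a" "\<And>a b c. r a b \<Longrightarrow> r b c \<Longrightarrow> r a c"
  shows "qcls X r x = qcls X r y"
  unfolding qcls_def using assms by blast



abbreviation W0 :: "nat \<Rightarrow> (nat \<times> complex) topology" where
  "W0 k \<equiv> prod_topology (discrete_topology {..<k}) circle"

lemma topspace_circle [simp]: "topspace circle = sphere 0 1"
  by (simp add: circle_def)

lemma topspace_W0: "topspace (W0 k) = {..<k} \<times> sphere 0 1"
  by simp

lemma wedge_rel_refl: "wedge_rel p p" by (simp add: wedge_rel_def)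
lemma wedge_rel_sym: "wedge_rel p q \<Longrightarrow> wedge_rel q p" by (auto simp: wedge_rel_def)
lemma wedge_rel_trans: "wedge_rel p q \<Longrightarrow> wedge_rel q s \<Longrightarrow> wedge_rel p s" by (auto simp: wedge_rel_def)

lemma topspace_wedge: "topspace (wedge k) = {wpt k c z | c z. c < k \<and> z \<in> sphere 0 1}"
  unfolding wedge_def topspace_quot_top wpt_def topspace_W0 by blast

lemma wpt_in_wedge: "c < k \<Longrightarrow> z \<in> sphere 0 1 \<Longrightarrow> wpt k c z \<in> topspace (wedge k)"
  unfolding topspace_wedge by blast

lemma wpt_eq:
  assumes "c < k" "c' < k" "z \<in> sphere 0 1" "z' \<in> sphere 0 1"
  shows "wpt k c z = wpt k c' z' \<longleftrightarrow> (c = c' \<and> z = z') \<or> (z = 1 \<and> z' = 1)"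
proof
  assume "wpt k c z = wpt k c' z'"
  moreover have "(c', z') \<in> wpt k c' z'" using assms by (simp add: wpt_def qcls_def wedge_rel_def)
  ultimately have "(c', z') \<in> wpt k c z" by simp
  hence "wedge_rel (c, z) (c', z')" by (simp add: wpt_def qcls_def)
  thus "(c = c' \<and> z = z') \<or> (z = 1 \<and> z' = 1)" by (auto simp: wedge_rel_def)
next
  assume "(c = c' \<and> z = z') \<or> (z = 1 \<and> z' = 1)"
  hence "wedge_rel (c, z) (c', z')" by (auto simp: wedge_rel_def)
  thus "wpt k c z = wpt k c' z'" unfolding wpt_def
    by (rule qcls_eq) (auto intro: wedge_rel_sym wedge_rel_trans)
qed

lemma wpt_one: "c < k \<Longrightarrow> c' < k \<Longrightarrow> wpt k c 1 = wpt k c' 1"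
  by (subst wpt_eq) auto

definition ec :: "nat \<Rightarrow> nat \<times> complex \<Rightarrow> complex" where
  "ec c p = (if fst p = c then snd p else 1)"

definition ev :: "nat \<Rightarrow> (nat \<times> complex) set \<Rightarrow> complex" where
  "ev c = lift (ec c)"

lemma ev_wpt:
  assumes "c' < k" "z \<in> sphere 0 1"
  shows "ev c (wpt k c' z) = (if c' = c then z else 1)"
proof -
  have "lift (ec c) (qcls (W0 k) wedge_rel (c', z)) = ec c (c', z)"
    by (rule lift_qcls) (use assms in \<open>auto simp: wedge_rel_def ec_def\<close>)
  thus ?thesis by (simp add: ev_def wpt_def ec_def)
qed

lemma continuous_ec: "continuous_map (W0 k) euclidean (ec c)"
  unfolding continuous_map_def
proof (intro conjI allI impI)
  show "ec c \<in> topspace (W0 k) \<rightarrow> topspace euclidean" by simp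
next
  fix V :: "complex set" assume "openin euclidean V"
  hence V: "open V" by simp
  have oc: "openin circle (sphere 0 1 \<inter> V)"
    unfolding circle_def openin_subtopology using V by auto
  have oc2: "openin circle (sphere 0 1)" by (metis openin_topspace topspace_circle)
  have eq: "{x \<in> topspace (W0 k). ec c x \<in> V} =
     (({c} \<inter> {..<k}) \<times> (sphere 0 1 \<inter> V)) \<union> (if 1 \<in> V then ({..<k} - {c}) \<times> sphere 0 1 else {})"
    by (auto simp: ec_def)
  show "openin (W0 k) {x \<in> topspace (W0 k). ec c x \<in> V}"
    unfolding eq
    by (intro openin_Un) (auto simp: openin_prod_Times_iff oc oc2)
qed

lemma continuous_ev: "continuous_map (wedge k) euclidean (ev c)"
  unfolding wedge_def ev_def
proof (rule continuous_map_lift[OF continuous_ec])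
  show "\<And>x. x \<in> topspace (W0 k) \<Longrightarrow> wedge_rel x x" by (rule wedge_rel_refl)
  show "\<And>x y. x \<in> topspace (W0 k) \<Longrightarrow> y \<in> topspace (W0 k) \<Longrightarrow> wedge_rel x y \<Longrightarrow> ec c y = ec c x"
    by (auto simp: wedge_rel_def ec_def)
qed

lemma ev_sphere: "w \<in> topspace (wedge k) \<Longrightarrow> ev c w \<in> sphere 0 1"
  unfolding topspace_wedge by (auto simp: ev_wpt)

lemma continuous_map_cprod:
  fixes f :: "'a \<Rightarrow> 'b \<Rightarrow> complex"
  shows "\<lbrakk>finite I; \<And>i. i \<in> I \<Longrightarrow> continuous_map X euclidean (\<lambda>x. f x i)\<rbrakk>
        \<Longrightarrow> continuous_map X euclidean (\<lambda>x. prod (f x) I)"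
  by (simp add: continuous_map_atin tendsto_prod)

definition PP :: "nat \<Rightarrow> nat \<Rightarrow> (nat \<Rightarrow> (nat \<times> complex) set) \<Rightarrow> (nat \<Rightarrow> complex)" where
  "PP n k f = restrict (\<lambda>c. \<Prod>i<n. ev c (f i)) {..<k}"

lemma topspace_power_top: "topspace (power_top n Y) = PiE {..<n} (\<lambda>_. topspace Y)"
  by (simp add: power_top_def)

lemma topspace_torus: "topspace (torus k) = PiE {..<k} (\<lambda>_. sphere 0 1)"
  by (simp add: torus_def)

lemma prod_sphere: "(\<And>i. i \<in> A \<Longrightarrow> g i \<in> sphere (0::complex) 1) \<Longrightarrow> prod g A \<in> sphere 0 1"
  by (simp flip: prod_norm)

lemma continuous_PP: "continuous_map (power_top n (wedge k)) (torus k) (PP n k)"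
  unfolding torus_def continuous_map_componentwise
proof (intro conjI ballI)
  show "PP n k ` topspace (power_top n (wedge k)) \<subseteq> extensional {..<k}"
    by (auto simp: PP_def)
next
  fix c assume c: "c \<in> {..<k}"
  have "continuous_map (power_top n (wedge k)) euclidean (\<lambda>f. \<Prod>i<n. ev c (f i))"
  proof (rule continuous_map_cprod)
    fix i assume "i \<in> {..<n}"
    hence "continuous_map (power_top n (wedge k)) (wedge k) (\<lambda>f. f i)"
      unfolding power_top_def by (rule continuous_map_product_projection)
    thus "continuous_map (power_top n (wedge k)) euclidean (\<lambda>f. ev c (f i))"
      using continuous_ev by (rule continuous_map_compose[unfolded o_def])
  qed simp
  moreover have "(\<lambda>f. \<Prod>i<n. ev c (f i)) \<in> topspace (power_top n (wedge k)) \<rightarrow> sphere 0 1"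
    by (auto simp: topspace_power_top intro!: prod_sphere ev_sphere)
  ultimately have "continuous_map (power_top n (wedge k)) circle (\<lambda>f. \<Prod>i<n. ev c (f i))"
    unfolding circle_def continuous_map_in_subtopology by simp
  thus "continuous_map (power_top n (wedge k)) circle (\<lambda>x. PP n k x c)"
    using c by (simp add: PP_def)
qed



lemma perm_rel_refl: "perm_rel n f f"
  unfolding perm_rel_def by (rule exI[of _ id]) simp

lemma perm_rel_sym: "perm_rel n f g \<Longrightarrow> perm_rel n g f"
  unfolding perm_rel_def
proof (elim exE conjE)
  fix p assume p: "p permutes {..<n}" and g: "g = f \<circ> p"
  have "f = g \<circ> inv p" using g permutes_inv_o(1)[OF p] by (simp add: o_assoc[symmetric])
  thus "\<exists>\<pi>. \<pi> permutes {..<n} \<and> f = g \<circ> \<pi>" using permutes_inv[OF p] by blast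
qed

lemma perm_rel_trans: "perm_rel n f g \<Longrightarrow> perm_rel n g h \<Longrightarrow> perm_rel n f h"
  unfolding perm_rel_def
proof (elim exE conjE)
  fix p q assume p: "p permutes {..<n}" and g: "g = f \<circ> p" and q: "q permutes {..<n}" and h: "h = g \<circ> q"
  have "h = f \<circ> (p \<circ> q)" using g h by (simp add: o_assoc)
  thus "\<exists>\<pi>. \<pi> permutes {..<n} \<and> h = f \<circ> \<pi>" using permutes_compose[OF q p] by blast
qed

lemma PP_perm: "perm_rel n f g \<Longrightarrow> PP n k g = PP n k f"
  unfolding perm_rel_def PP_def
proof (elim exE conjE)
  fix p assume p: "p permutes {..<n}" and g: "g = f \<circ> p"
  have "(\<Prod>i<n. ev c (g i)) = (\<Prod>i<n. ev c (f i))" for c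
    using prod.permute[OF p, of "\<lambda>i. ev c (f i)"] g by (simp add: o_def)
  thus "restrict (\<lambda>c. \<Prod>i<n. ev c (g i)) {..<k} = restrict (\<lambda>c. \<Prod>i<n. ev c (f i)) {..<k}"
    by simp
qed

abbreviation cls1 :: "nat \<Rightarrow> nat \<Rightarrow> (nat \<Rightarrow> (nat \<times> complex) set) \<Rightarrow> (nat \<Rightarrow> (nat \<times> complex) set) set" where
  "cls1 n k \<equiv> qcls (power_top n (wedge k)) (perm_rel n)"

abbreviation cls2 where
  "cls2 n k \<equiv> qcls (SP n (wedge k)) (equivclp (SPbar_step n k))"

definition Psi :: "nat \<Rightarrow> nat \<Rightarrow> (nat \<Rightarrow> (nat \<times> complex) set) set \<Rightarrow> (nat \<Rightarrow> complex)" where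
  "Psi n k = lift (PP n k)"

lemma Psi_cls1: "f \<in> topspace (power_top n (wedge k)) \<Longrightarrow> Psi n k (cls1 n k f) = PP n k f"
  unfolding Psi_def by (rule lift_qcls) (auto intro: perm_rel_refl PP_perm)

lemma continuous_Psi: "continuous_map (SP n (wedge k)) (torus k) (Psi n k)"
  unfolding SP_def Psi_def
  by (rule continuous_map_lift[OF continuous_PP]) (auto intro: perm_rel_refl PP_perm)

lemma topspace_SP: "topspace (SP n (wedge k)) = cls1 n k ` topspace (power_top n (wedge k))"
  by (simp add: SP_def topspace_quot_top)

lemma cls1_eq: "perm_rel n f g \<Longrightarrow> cls1 n k f = cls1 n k g"
  by (rule qcls_eq) (auto intro: perm_rel_sym perm_rel_trans)

lemma mem_cls1: "g \<in> cls1 n k f \<Longrightarrow> g \<in> topspace (power_top n (wedge k)) \<and> perm_rel n f g"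
  by (simp add: qcls_def)

lemma PP_update2:
  assumes f: "f \<in> topspace (power_top n (wedge k))" and ij: "i < n" "j < n" "i \<noteq> j" and c: "c < k"
    and xy: "x \<in> sphere 0 1" "y \<in> sphere 0 1" and fi: "f i = wpt k c x" and fj: "f j = wpt k c y"
  shows "PP n k (f(i := wpt k c 1, j := wpt k c (x * y))) = PP n k f"
proof -
  let ?g = "f(i := wpt k c 1, j := wpt k c (x * y))"
  have xys: "x * y \<in> sphere 0 1" using xy by (simp add: norm_mult)
  have "(\<Prod>l<n. ev d (?g l)) = (\<Prod>l<n. ev d (f l))" for d
  proof -
    have fin: "finite ({..<n} - {i})" by simp
    have jin: "j \<in> {..<n} - {i}" using ij by simp
    have A: "(\<Prod>l<n. h l) = h i * (h j * (\<Prod>l\<in>{..<n} - {i} - {j}. h l))" for h :: "nat \<Rightarrow> complex"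
      using prod.remove[of "{..<n}" i h] prod.remove[OF fin jin, of h] ij by simp
    have B: "(\<Prod>l\<in>{..<n} - {i} - {j}. ev d (?g l)) = (\<Prod>l\<in>{..<n} - {i} - {j}. ev d (f l))"
      by (rule prod.cong) auto
    show ?thesis
      unfolding A[of "\<lambda>l. ev d (?g l)"] A[of "\<lambda>l. ev d (f l)"] B
      using ij c xy xys by (simp add: fi fj ev_wpt)
  qed
  thus ?thesis by (simp add: PP_def)
qed

lemma topspace_power_update:
  assumes "f \<in> topspace (power_top n (wedge k))" "i < n" "w \<in> topspace (wedge k)"
  shows "f(i := w) \<in> topspace (power_top n (wedge k))"
  using assms by (auto simp: topspace_power_top PiE_iff extensional_def)

lemma step_Psi:
  assumes "SPbar_step n k A B" shows "Psi n k A = Psi n k B"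
proof -
  from assms obtain f i j c x y where A: "A \<in> topspace (SP n (wedge k))" and f: "f \<in> A"
    and ij: "i < n" "j < n" "i \<noteq> j" and c: "c < k" and xy: "x \<in> sphere 0 1" "y \<in> sphere 0 1"
    and fi: "f i = wpt k c x" and fj: "f j = wpt k c y"
    and B: "B = cls1 n k (f(i := wpt k c 1, j := wpt k c (x * y)))"
    unfolding SPbar_step_def by blast
  from A obtain g where g: "g \<in> topspace (power_top n (wedge k))" "A = cls1 n k g"
    unfolding topspace_SP by blast
  have ft: "f \<in> topspace (power_top n (wedge k))" and "perm_rel n g f" using mem_cls1 f g(2) by blast+
  hence "A = cls1 n k f" using g(2) cls1_eq by metis
  hence PA: "Psi n k A = PP n k f" using Psi_cls1[OF ft] by simp
  have xys: "x * y \<in> sphere 0 1" using xy by (simp add: norm_mult)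
  have gt: "f(i := wpt k c 1, j := wpt k c (x * y)) \<in> topspace (power_top n (wedge k))"
    by (intro topspace_power_update ft ij wpt_in_wedge c xys) simp
  show ?thesis using PA B Psi_cls1[OF gt] PP_update2[OF ft ij c xy fi fj] by simp
qed

lemma equiv_Psi: "equivclp (SPbar_step n k) A B \<Longrightarrow> Psi n k A = Psi n k B"
proof (induction rule: equivclp_induct)
  case base thus ?case by simp
next
  case (step y z) thus ?case using step_Psi by metis
qed

definition Phi :: "nat \<Rightarrow> nat \<Rightarrow> (nat \<Rightarrow> (nat \<times> complex) set) set set \<Rightarrow> (nat \<Rightarrow> complex)" where
  "Phi n k = lift (Psi n k)"

lemma continuous_Phi: "continuous_map (SPbar n k) (torus k) (Phi n k)"
  unfolding SPbar_def Phi_def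
  by (rule continuous_map_lift[OF continuous_Psi]) (auto simp: equiv_Psi equivclp_sym)

lemma topspace_SPbar: "topspace (SPbar n k) = cls2 n k ` cls1 n k ` topspace (power_top n (wedge k))"
  by (simp add: SPbar_def topspace_quot_top topspace_SP)

lemma Phi_cls: "f \<in> topspace (power_top n (wedge k)) \<Longrightarrow> Phi n k (cls2 n k (cls1 n k f)) = PP n k f"
proof -
  assume f: "f \<in> topspace (power_top n (wedge k))"
  have "cls1 n k f \<in> topspace (SP n (wedge k))" using f topspace_SP by blast
  hence "Phi n k (cls2 n k (cls1 n k f)) = Psi n k (cls1 n k f)"
    unfolding Phi_def by (rule lift_qcls) (auto simp: equiv_Psi equivclp_sym)
  thus ?thesis using Psi_cls1[OF f] by simp
qed

lemma cls2_eq: "equivclp (SPbar_step n k) A B \<Longrightarrow> cls2 n k A = cls2 n k B"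
  by (rule qcls_eq) (auto intro: equivclp_sym equivclp_trans)



abbreviation TT where "TT n k \<equiv> topspace (power_top n (wedge k))"

definition reduced :: "nat \<Rightarrow> nat \<Rightarrow> (nat \<Rightarrow> (nat \<times> complex) set) \<Rightarrow> bool" where
  "reduced n k f \<longleftrightarrow> \<not> (\<exists>i j c x y. i < n \<and> j < n \<and> i \<noteq> j \<and> c < k \<and> x \<in> sphere 0 1 \<and> y \<in> sphere 0 1
      \<and> x \<noteq> 1 \<and> y \<noteq> 1 \<and> f i = wpt k c x \<and> f j = wpt k c y)"

definition nb where "nb n k f = {i \<in> {..<n}. f i \<noteq> wpt k 0 1}"

lemma TT_wedge: "f \<in> TT n k \<Longrightarrow> i < n \<Longrightarrow> \<exists>c z. c < k \<and> z \<in> sphere 0 1 \<and> f i = wpt k c z"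
proof -
  assume f: "f \<in> TT n k" and i: "i < n"
  hence "f i \<in> topspace (wedge k)" by (auto simp: topspace_power_top PiE_iff)
  thus ?thesis unfolding topspace_wedge by blast
qed

lemma wpt_base_iff: "0 < k \<Longrightarrow> c < k \<Longrightarrow> z \<in> sphere 0 1 \<Longrightarrow> wpt k c z = wpt k 0 1 \<longleftrightarrow> z = 1"
  by (subst wpt_eq) auto

lemma reduce_step:
  assumes k: "0 < k" and f: "f \<in> TT n k" and nr: "\<not> reduced n k f"
  shows "\<exists>f'. f' \<in> TT n k \<and> PP n k f' = PP n k f \<and> SPbar_step n k (cls1 n k f) (cls1 n k f')
     \<and> card (nb n k f') < card (nb n k f)"
proof -
  from nr obtain i j c x y where ij: "i < n" "j < n" "i \<noteq> j" and c: "c < k"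
    and xy: "x \<in> sphere 0 1" "y \<in> sphere 0 1" and x1: "x \<noteq> 1" and y1: "y \<noteq> 1"
    and fi: "f i = wpt k c x" and fj: "f j = wpt k c y"
    unfolding reduced_def by blast
  define f' where "f' = f(i := wpt k c 1, j := wpt k c (x * y))"
  have xys: "x * y \<in> sphere 0 1" using xy by (simp add: norm_mult)
  have ft: "f' \<in> TT n k" unfolding f'_def
    by (intro topspace_power_update f ij wpt_in_wedge c xys) simp
  have PP: "PP n k f' = PP n k f" unfolding f'_def by (rule PP_update2[OF f ij c xy fi fj])
  have fA: "f \<in> cls1 n k f" using f by (simp add: qcls_def perm_rel_refl)
  have A: "cls1 n k f \<in> topspace (SP n (wedge k))" using f topspace_SP by blast
  have st: "SPbar_step n k (cls1 n k f) (cls1 n k f')"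
    unfolding SPbar_step_def
  proof (intro conjI bexI[OF _ fA])
    show "cls1 n k f \<in> topspace (SP n (wedge k))" by (rule A)
    show "\<exists>i' j' c' x' y'. i' < n \<and> j' < n \<and> i' \<noteq> j' \<and> c' < k \<and> x' \<in> sphere 0 1 \<and> y' \<in> sphere 0 1 \<and>
        f i' = wpt k c' x' \<and> f j' = wpt k c' y' \<and>
        cls1 n k f' = cls1 n k (f(i' := wpt k c' 1, j' := wpt k c' (x' * y')))"
      apply (rule exI[of _ i], rule exI[of _ j], rule exI[of _ c], rule exI[of _ x], rule exI[of _ y])
      using ij c xy fi fj by (simp add: f'_def)
  qed
  have sub: "nb n k f' \<subseteq> nb n k f - {i}"
  proof
    fix l assume l: "l \<in> nb n k f'"
    hence ln: "l < n" and fl: "f' l \<noteq> wpt k 0 1" by (auto simp: nb_def)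
    have "wpt k c 1 = wpt k 0 1" using wpt_one c k by blast
    hence "f' i = wpt k 0 1" using ij by (simp add: f'_def)
    hence "l \<noteq> i" using fl by blast
    moreover have "f l \<noteq> wpt k 0 1"
    proof (cases "l = j")
      case True thus ?thesis using fj wpt_base_iff[OF k c xy(2)] y1 by simp
    next
      case False thus ?thesis using fl \<open>l \<noteq> i\<close> by (simp add: f'_def)
    qed
    ultimately show "l \<in> nb n k f - {i}" using ln by (simp add: nb_def)
  qed
  have "i \<in> nb n k f" using ij fi wpt_base_iff[OF k c xy(1)] x1 by (simp add: nb_def)
  hence "nb n k f' \<subset> nb n k f" using sub by blast
  hence "card (nb n k f') < card (nb n k f)" by (rule psubset_card_mono[rotated]) (simp add: nb_def)
  thus ?thesis using ft PP st by blast
qed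

lemma reduce:
  assumes k: "0 < k"
  shows "f \<in> TT n k \<Longrightarrow> \<exists>g. g \<in> TT n k \<and> reduced n k g \<and> PP n k g = PP n k f
     \<and> equivclp (SPbar_step n k) (cls1 n k f) (cls1 n k g)"
proof (induction "card (nb n k f)" arbitrary: f rule: less_induct)
  case less
  show ?case
  proof (cases "reduced n k f")
    case True show ?thesis by (rule exI[of _ f]) (simp add: less.prems True)
  next
    case False
    then obtain f' where f': "f' \<in> TT n k" "PP n k f' = PP n k f" "SPbar_step n k (cls1 n k f) (cls1 n k f')"
      "card (nb n k f') < card (nb n k f)" using reduce_step[OF k less.prems] by blast
    from less.hyps[OF f'(4) f'(1)] obtain g where g: "g \<in> TT n k" "reduced n k g" "PP n k g = PP n k f'"
      "equivclp (SPbar_step n k) (cls1 n k f') (cls1 n k g)" by blast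
    have "equivclp (SPbar_step n k) (cls1 n k f) (cls1 n k g)"
      using r_into_equivclp[of "SPbar_step n k", OF f'(3)] g(4) by (rule equivclp_trans)
    thus ?thesis using g f'(2) by auto
  qed
qed



lemma reducedD:
  assumes "reduced n k f" "i < n" "j < n" "c < k" "x \<in> sphere 0 1" "y \<in> sphere 0 1" "x \<noteq> 1" "y \<noteq> 1"
    "f i = wpt k c x" "f j = wpt k c y"
  shows "i = j"
proof (rule ccontr)
  assume ij: "i \<noteq> j"
  have "\<exists>i j c x y. i < n \<and> j < n \<and> i \<noteq> j \<and> c < k \<and> x \<in> sphere 0 1 \<and> y \<in> sphere 0 1
      \<and> x \<noteq> 1 \<and> y \<noteq> 1 \<and> f i = wpt k c x \<and> f j = wpt k c y"
    apply (rule exI[of _ i], rule exI[of _ j], rule exI[of _ c], rule exI[of _ x], rule exI[of _ y])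
    using assms ij by simp
  thus False using assms(1) unfolding reduced_def by (simp only: not_True_eq_False)
qed

lemma PP_at: "c < k \<Longrightarrow> PP n k f c = (\<Prod>i<n. ev c (f i))"
  by (simp add: PP_def)

lemma ev_ne1:
  assumes f: "f \<in> TT n k" and l: "l < n" and e: "ev c (f l) \<noteq> 1"
  shows "\<exists>z. z \<in> sphere 0 1 \<and> z \<noteq> 1 \<and> f l = wpt k c z"
proof -
  obtain c' z where cz: "c' < k" "z \<in> sphere 0 1" "f l = wpt k c' z" using TT_wedge[OF f l] by blast
  have "ev c (f l) = (if c' = c then z else 1)" using cz ev_wpt by simp
  thus ?thesis using e cz by (auto split: if_splits)
qed

lemma red_val:
  assumes red: "reduced n k f" and f: "f \<in> TT n k" and c: "c < k" and i: "i < n"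
    and fi: "f i = wpt k c z" and z: "z \<in> sphere 0 1" "z \<noteq> 1"
  shows "PP n k f c = z"
proof -
  have "(\<Prod>l<n. ev c (f l)) = ev c (f i) * (\<Prod>l\<in>{..<n} - {i}. ev c (f l))"
    using i by (simp add: prod.remove)
  also have "(\<Prod>l\<in>{..<n} - {i}. ev c (f l)) = 1"
  proof (rule prod.neutral, rule ballI, rule ccontr)
    fix l assume l: "l \<in> {..<n} - {i}" and ne: "ev c (f l) \<noteq> 1"
    obtain z' where "z' \<in> sphere 0 1" "z' \<noteq> 1" "f l = wpt k c z'" using ev_ne1[OF f _ ne] l by auto
    thus False using reducedD[OF red _ i c, of l z' z] l fi z by auto
  qed
  finally show ?thesis using c z fi by (simp add: PP_at ev_wpt)
qed

lemma cnt:
  assumes red: "reduced n k f" and f: "f \<in> TT n k" and c: "c < k" and z: "z \<in> sphere 0 1" "z \<noteq> 1"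
  shows "card {i \<in> {..<n}. f i = wpt k c z} = (if PP n k f c = z then 1 else 0)"
proof (cases "\<exists>i<n. f i = wpt k c z")
  case True
  then obtain i where i: "i < n" "f i = wpt k c z" by blast
  have "j = i" if "j < n" "f j = wpt k c z" for j
    using reducedD[OF red that(1) i(1) c z(1) z(1) z(2) z(2) that(2) i(2)] .
  hence "{i \<in> {..<n}. f i = wpt k c z} = {i}" using i by blast
  thus ?thesis using red_val[OF red f c i(1) i(2) z] by simp
next
  case False
  hence e: "{i \<in> {..<n}. f i = wpt k c z} = {}" by auto
  have "PP n k f c \<noteq> z"
  proof (cases "\<forall>l<n. ev c (f l) = 1")
    case True thus ?thesis using c z by (simp add: PP_at)
  next
    case False
    then obtain l where l: "l < n" "ev c (f l) \<noteq> 1" by blast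
    then obtain z' where z': "z' \<in> sphere 0 1" "z' \<noteq> 1" "f l = wpt k c z'" using ev_ne1[OF f] by blast
    have "PP n k f c = z'" by (rule red_val[OF red f c l(1) z'(3) z'(1,2)])
    moreover have "z' \<noteq> z" using z'(3) l(1) \<open>\<not> (\<exists>i<n. f i = wpt k c z)\<close> by blast
    ultimately show ?thesis by simp
  qed
  thus ?thesis using e by simp
qed

definition MM :: "nat \<Rightarrow> (nat \<Rightarrow> 'a) \<Rightarrow> 'a multiset" where "MM n f = image_mset f (mset_set {..<n})"

lemma count_MM: "count (MM n f) w = card {i \<in> {..<n}. f i = w}"
  unfolding MM_def by (rule count_image_mset_eq_card_vimage) simp

lemma red_mset:
  assumes k: "0 < k" and f: "f \<in> TT n k" and g: "g \<in> TT n k" and rf: "reduced n k f" and rg: "reduced n k g"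
    and P: "PP n k f = PP n k g"
  shows "MM n f = MM n g"
proof -
  define B where "B = wpt k 0 1"
  have nonbase: "count (MM n f) w = count (MM n g) w" if w: "w \<noteq> B" for w
  proof (cases "w \<in> topspace (wedge k)")
    case True
    then obtain c z where cz: "c < k" "z \<in> sphere 0 1" "w = wpt k c z" unfolding topspace_wedge by blast
    have "z \<noteq> 1" using w cz wpt_base_iff[OF k cz(1,2)] by (simp add: B_def)
    thus ?thesis using cnt[OF rf f cz(1,2)] cnt[OF rg g cz(1,2)] P cz(3) by (simp add: count_MM)
  next
    case False
    have "f i \<in> topspace (wedge k)" "g i \<in> topspace (wedge k)" if "i < n" for i
      using f g that by (auto simp: topspace_power_top PiE_iff)
    hence "{i \<in> {..<n}. f i = w} = {}" "{i \<in> {..<n}. g i = w} = {}" using False by auto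
    thus ?thesis by (simp only: count_MM card.empty)
  qed
  have F: "{#y \<in># MM n f. y \<noteq> B#} = {#y \<in># MM n g. y \<noteq> B#}"
    by (rule multiset_eqI) (simp add: nonbase)
  have sz: "size (MM n f) = n" "size (MM n g) = n" by (simp_all add: MM_def)
  have pf: "MM n f = replicate_mset (count (MM n f) B) B + {#y \<in># MM n f. y \<noteq> B#}"
    using multiset_partition[of "MM n f" "\<lambda>y. y = B"] by (simp add: filter_eq_replicate_mset)
  have pg: "MM n g = replicate_mset (count (MM n g) B) B + {#y \<in># MM n g. y \<noteq> B#}"
    using multiset_partition[of "MM n g" "\<lambda>y. y = B"] by (simp add: filter_eq_replicate_mset)
  have "count (MM n f) B = count (MM n g) B"
    using arg_cong[OF pf, of size] arg_cong[OF pg, of size] sz F by simp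
  thus ?thesis using pf pg F by metis
qed

lemma mset_perm:
  assumes f: "f \<in> TT n k" and g: "g \<in> TT n k" and M: "MM n f = MM n g"
  shows "perm_rel n g f"
proof -
  have "mset (map f [0..<n]) = mset (map g [0..<n])"
    using M by (simp add: MM_def atLeast0LessThan)
  then obtain p where p: "p permutes {..<length (map g [0..<n])}"
    "permute_list p (map g [0..<n]) = map f [0..<n]" by (rule mset_eq_permutation)
  have pn: "p permutes {..<n}" using p(1) by simp
  have "f i = g (p i)" for i
  proof (cases "i < n")
    case True
    have "f i = map f [0..<n] ! i" using True by simp
    also have "\<dots> = permute_list p (map g [0..<n]) ! i" using p(2) by simp
    also have "\<dots> = map g [0..<n] ! p i" using permute_list_nth[OF p(1)] True by simp
    also have "\<dots> = g (p i)" using permutes_in_image[OF pn] True by simp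
    finally show ?thesis .
  next
    case False
    have "p i = i" using pn False by (simp add: permutes_not_in)
    moreover have "f i = undefined" "g i = undefined"
      using f g False by (auto simp: topspace_power_top PiE_iff extensional_def)
    ultimately show ?thesis by simp
  qed
  hence "f = g \<circ> p" by (simp add: fun_eq_iff)
  thus ?thesis unfolding perm_rel_def using pn by blast
qed



lemma PP_torus: "f \<in> TT n k \<Longrightarrow> PP n k f \<in> topspace (torus k)"
  using continuous_map_image_subset_topspace[OF continuous_PP] by blast

lemma PP_card:
  assumes f: "f \<in> TT n k"
  shows "card {c \<in> {..<k}. PP n k f c \<noteq> 1} \<le> n"
proof -
  let ?S = "{c \<in> {..<k}. PP n k f c \<noteq> 1}"
  define \<iota> where "\<iota> c = (SOME i. i < n \<and> ev c (f i) \<noteq> 1)" for c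
  have ex: "\<exists>i. i < n \<and> ev c (f i) \<noteq> 1" if "c \<in> ?S" for c
  proof (rule ccontr)
    assume "\<not> ?thesis"
    hence "(\<Prod>i<n. ev c (f i)) = 1" by (intro prod.neutral) auto
    moreover have "c < k" "PP n k f c \<noteq> 1" using that by auto
    ultimately show False using PP_at[of c k n f] by simp
  qed
  have io: "\<iota> c < n \<and> ev c (f (\<iota> c)) \<noteq> 1" if "c \<in> ?S" for c
    unfolding \<iota>_def using someI_ex[OF ex[OF that]] .
  have "inj_on \<iota> ?S"
  proof (rule inj_onI)
    fix c c' assume c: "c \<in> ?S" and c': "c' \<in> ?S" and eq: "\<iota> c = \<iota> c'"
    obtain z where z: "z \<in> sphere 0 1" "z \<noteq> 1" "f (\<iota> c) = wpt k c z" using ev_ne1[OF f] io[OF c] by blast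
    obtain z' where z': "z' \<in> sphere 0 1" "z' \<noteq> 1" "f (\<iota> c) = wpt k c' z'" using ev_ne1[OF f] io[OF c'] eq by metis
    have "wpt k c z = wpt k c' z'" using z z' by simp
    thus "c = c'" using wpt_eq[of c k c' z z'] c c' z z' by auto
  qed
  moreover have "\<iota> ` ?S \<subseteq> {..<n}" using io by auto
  ultimately have "card ?S \<le> card {..<n}" by (rule card_inj_on_le) simp
  thus ?thesis by simp
qed

lemma topspace_skel: "topspace (torus_skeleton n k) = topspace (torus k) \<inter> {x. card {i \<in> {..<k}. x i \<noteq> 1} \<le> n}"
  by (simp add: torus_skeleton_def)

lemma PP_skel: "f \<in> TT n k \<Longrightarrow> PP n k f \<in> topspace (torus_skeleton n k)"
  using PP_torus PP_card topspace_skel by blast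

lemma PP_surj:
  assumes k: "0 < k" and t: "t \<in> topspace (torus_skeleton n k)"
  shows "\<exists>f \<in> TT n k. PP n k f = t"
proof -
  define S where "S = {c \<in> {..<k}. t c \<noteq> 1}"
  have t2: "t \<in> topspace (torus k)" "card {i \<in> {..<k}. t i \<noteq> 1} \<le> n"
    using t topspace_skel by blast+
  have tT: "t \<in> PiE {..<k} (\<lambda>_. sphere 0 1)" using t2(1) topspace_torus by blast
  have cS: "card S \<le> n" using t2(2) unfolding S_def .
  have "finite S" by (simp add: S_def)
  then obtain s where s: "bij_betw s {0..<card S} S" using ex_bij_betw_nat_finite by blast
  have sS: "i < card S \<Longrightarrow> s i \<in> S" for i using s by (auto simp: bij_betw_def)
  have sinj: "i < card S \<Longrightarrow> j < card S \<Longrightarrow> s i = s j \<Longrightarrow> i = j" for i j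
    using s by (auto simp: bij_betw_def inj_on_def)
  have tsph: "c < k \<Longrightarrow> t c \<in> sphere 0 1" for c by (rule PiE_mem[OF tT]) simp
  define f where "f i = (if i < n then (if i < card S then wpt k (s i) (t (s i)) else wpt k 0 1) else undefined)" for i
  have fT: "f \<in> TT n k"
    unfolding topspace_power_top
  proof (rule PiE_I)
    fix i assume i: "i \<in> {..<n}"
    show "f i \<in> topspace (wedge k)"
    proof (cases "i < card S")
      case True
      hence "s i < k" using sS by (simp add: S_def)
      thus ?thesis using True i tsph by (simp add: f_def wpt_in_wedge)
    next
      case False thus ?thesis using i k by (simp add: f_def wpt_in_wedge)
    qed
  next
    fix i assume "i \<notin> {..<n}" thus "f i = undefined" by (simp add: f_def)
  qed
  have evf: "ev c (f i) = (if i < card S \<and> s i = c then t c else 1)" if i: "i < n" for c i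
  proof (cases "i < card S")
    case True
    hence "s i < k" using sS by (simp add: S_def)
    thus ?thesis using True i tsph ev_wpt by (auto simp: f_def)
  next
    case False thus ?thesis using i k ev_wpt[of 0 k 1 c] by (simp add: f_def)
  qed
  have "PP n k f c = t c" for c
  proof (cases "c < k")
    case False thus ?thesis using tT by (simp add: PP_def PiE_iff extensional_def)
  next
    case True
    have "PP n k f c = (\<Prod>i<n. (if i < card S \<and> s i = c then t c else 1))"
      using True evf by (simp add: PP_at)
    also have "\<dots> = (\<Prod>i\<in>{i \<in> {..<n}. i < card S \<and> s i = c}. t c)"
      by (rule prod.inter_filter[symmetric]) simp
    also have "\<dots> = t c"
    proof (cases "c \<in> S")
      case True
      then obtain i0 where i0: "i0 < card S" "s i0 = c" using s unfolding bij_betw_def by (metis atLeastLessThan_iff imageE)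
      have "{i \<in> {..<n}. i < card S \<and> s i = c} = {i0}" using i0 cS sinj by auto
      thus ?thesis by simp
    next
      case False
      hence "{i \<in> {..<n}. i < card S \<and> s i = c} = {}" using sS by auto
      moreover have "t c = 1" using False \<open>c < k\<close> by (simp add: S_def)
      ultimately show ?thesis by simp
    qed
    finally show ?thesis .
  qed
  thus ?thesis using fT by auto
qed



lemma compact_wedge: "compact_space (wedge k)"
  unfolding wedge_def
proof (rule compact_quot)
  have "compact_space circle" unfolding circle_def
    by (rule compact_space_subtopology) simp
  thus "compact_space (W0 k)"
    by (simp add: compact_space_prod_topology compact_space_discrete_topology)
qed

lemma compact_SPbar: "compact_space (SPbar n k)"
  unfolding SPbar_def SP_def
  by (intro compact_quot) (simp add: power_top_def compact_space_product_topology compact_wedge)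

lemma Hausdorff_skel: "Hausdorff_space (torus_skeleton n k)"
  unfolding torus_skeleton_def torus_def
  by (intro Hausdorff_space_subtopology) (simp add: Hausdorff_space_product_topology circle_def Hausdorff_space_subtopology)

theorem mainTheorem2:
  fixes n k :: nat
  assumes "n \<ge> 1" and "k \<ge> 1"
  shows "SPbar n k homeomorphic_space torus_skeleton n k"
proof -
  have k: "0 < k" using assms by simp
  have img: "Phi n k ` topspace (SPbar n k) = topspace (torus_skeleton n k)"
  proof
    show "Phi n k ` topspace (SPbar n k) \<subseteq> topspace (torus_skeleton n k)"
      unfolding topspace_SPbar using Phi_cls PP_skel by auto
    show "topspace (torus_skeleton n k) \<subseteq> Phi n k ` topspace (SPbar n k)"
    proof
      fix t assume "t \<in> topspace (torus_skeleton n k)"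
      then obtain f where f: "f \<in> TT n k" "PP n k f = t" using PP_surj[OF k] by blast
      hence "t = Phi n k (cls2 n k (cls1 n k f))" using Phi_cls by simp
      thus "t \<in> Phi n k ` topspace (SPbar n k)" unfolding topspace_SPbar using f(1) by blast
    qed
  qed
  have cont: "continuous_map (SPbar n k) (torus_skeleton n k) (Phi n k)"
    unfolding torus_skeleton_def continuous_map_in_subtopology
  proof
    show "continuous_map (SPbar n k) (torus k) (Phi n k)" by (rule continuous_Phi)
    show "Phi n k \<in> topspace (SPbar n k) \<rightarrow> {x. card {i \<in> {..<k}. x i \<noteq> 1} \<le> n}"
      using img topspace_skel by blast
  qed
  have inj: "inj_on (Phi n k) (topspace (SPbar n k))"
  proof (rule inj_onI)
    fix C D assume C: "C \<in> topspace (SPbar n k)" and D: "D \<in> topspace (SPbar n k)"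
      and eq: "Phi n k C = Phi n k D"
    obtain f where f: "f \<in> TT n k" "C = cls2 n k (cls1 n k f)" using C unfolding topspace_SPbar by blast
    obtain g where g: "g \<in> TT n k" "D = cls2 n k (cls1 n k g)" using D unfolding topspace_SPbar by blast
    have P: "PP n k f = PP n k g" using eq f g Phi_cls by simp
    obtain f' where f': "f' \<in> TT n k" "reduced n k f'" "PP n k f' = PP n k f"
      "equivclp (SPbar_step n k) (cls1 n k f) (cls1 n k f')" using reduce[OF k f(1)] by blast
    obtain g' where g': "g' \<in> TT n k" "reduced n k g'" "PP n k g' = PP n k g"
      "equivclp (SPbar_step n k) (cls1 n k g) (cls1 n k g')" using reduce[OF k g(1)] by blast
    have "MM n f' = MM n g'" using red_mset[OF k f'(1) g'(1) f'(2) g'(2)] f'(3) g'(3) P by simp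
    hence "perm_rel n g' f'" using mset_perm[OF f'(1) g'(1)] by simp
    hence "cls1 n k g' = cls1 n k f'" by (rule cls1_eq)
    hence "equivclp (SPbar_step n k) (cls1 n k f) (cls1 n k g)"
      using f'(4) g'(4) by (metis equivclp_sym equivclp_trans)
    thus "C = D" using f(2) g(2) cls2_eq by metis
  qed
  have "homeomorphic_map (SPbar n k) (torus_skeleton n k) (Phi n k)"
    by (rule continuous_imp_homeomorphic_map[OF cont compact_SPbar Hausdorff_skel img inj])
  thus ?thesis by (rule homeomorphic_map_imp_homeomorphic_space)
qed

end
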